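(* Let $(\mathfrak g,N)$ be a finite-dimensional Nijenhuis perm algebra, $r\in\mathfrak g\otimes\mathfrak g$ symmetric and $S:\mathfrak g\to\mathfrak g$ linear. Then $r$ is a solution of the $S$-admissible perm Yang–Baxter equation in $(\mathfrak g,N)$ if and only if $r^\sharp:\mathfrak g^*\to\mathfrak g$ is a weak $\mathcal O$-operator associated to $(\mathfrak g^*,R^*-L^*,R^* )$ and $S^*$. If moreover $S$ is admissible to $(\mathfrak g,N)$, then $r$ is a solution of the $S$-admissible perm Yang–Baxter equation in $(\mathfrak g,N)$ if and only if $r^\sharp$ is an $\mathcal O$-operator associated to the representation $(\mathfrak g^*,R^*-L^*,R^*,S^* )$ of $(\mathfrak g,N)$.
   Context: Over a field $K$. A (right) perm algebra: bilinear product with $(xy)z=x(yz)=x(zy)$. Nijenhuis operator: $N(x)N(y)+N^2(xy)=N(N(x)y)+N(xN(y))$. The $S$-admissible perm Yang–Baxter equation in $(\mathfrak g,N)$ for $r=\sum r^1\otimes r^2$ (second copy $\bar r$): $r_{13}r_{12}-r_{13}r_{23}+r_{23}r_{12}-r_{12}r_{23}=0$ and $(S\otimes\mathrm{id}-\mathrm{id}\otimes N)(r)=0$, where $r_{13}r_{12}=r^1\bar r^1\otimes\bar r^2\otimes r^2$, $r_{13}r_{23}=r^1\otimes\bar r^1\otimes r^2\bar r^2$, $r_{23}r_{12}=\bar r^1\otimes r^1\bar r^2\otimes r^2$, $r_{12}r_{23}=r^1\otimes r^2\bar r^1\otimes\bar r^2$. $r^\sharp(u^* )=\langle u^*,r^1\rangle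 r^2$. $\langle\xi R^*(a),y\rangle=\langle\xi,ya\rangle$, $\langle L^*(a)\xi,y\rangle=\langle\xi,ay\rangle$; in $(\mathfrak g^*,R^*-L^*,R^* )$ the left action is $(R^*-L^* )(a)\xi=\xi R^*(a)-L^*(a)\xi$ and the right action is $\xi R^*(a)$. A representation $(V,\ell,r)$ of $\mathfrak g$ is written with left action $\ell(x)v$ and right action $v\,r(x)$. Given a Nijenhuis perm algebra $(\mathfrak g,N)$, a representation $(V,\ell,r)$ of $\mathfrak g$ and $\alpha:V\to V$, a weak $\mathcal O$-operator associated to $(V,\ell,r)$ and $\alpha$ is a linear $T:V\to\mathfrak g$ with $T(u)T(v)=T(\ell(T(u))v+u\,r(T(v)))$ for $u,v\in V$ and $N\circ T=T\circ\alpha$; if $(V,\ell,r,\alpha)$ is a representation of $(\mathfrak g,N)$ (i.e. $\ell(N(x))\alpha(v)+\alpha^2(\ell(x)v)=\alpha(\ell(N(x))v)+\alpha(\ell(x)\alpha(v))$ and $\alpha(v)r(N(x))+\alpha^2(v\,r(x))=\alpha(v\,r(N(x)))+\alpha(\alpha(v)r(x))$) it is called an $\mathcal O$-operator associated to $(V,\ell,r,\alpha)$. $S$ is admissible to $(\mathfrak g,N)$ if $S(N(x)y)+xS^2(y)-N(x)S(y)-S(xS(y))=0$ and $S(xN(y))+S^2(x)y-S(x)N(y)-S(S(x)y)=0$. *)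

theory Defs
  imports Main
begin

text \<open>Finite-dimensional vector spaces over a field 'k are represented in coordinates
  as functions 'n \<Rightarrow> 'k with 'n a finite index type (a basis). Tensors in g\<otimes>g and
  g\<otimes>g\<otimes>g are coordinate arrays. The dual g* is again 'n \<Rightarrow> 'k with the
  pairing below.\<close>

type_synonym ('n, 'k) vec = "'n \<Rightarrow> 'k"

definition ebas :: "'n \<Rightarrow> ('n, 'k::field) vec" where
  "ebas i = (\<lambda>j. if j = i then 1 else 0)"

definition lin :: "(('m, 'k::field) vec \<Rightarrow> ('n, 'k) vec) \<Rightarrow> bool" where
  "lin f \<longleftrightarrow> (\<forall>x y. f (\<lambda>i. x i + y i) = (\<lambda>i. f x i + f y i)) \<and>
              (\<forall>c x. f (\<lambda>i. c * x i) = (\<lambda>i. c * f x i))"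

definition bilin :: "(('a, 'k::field) vec \<Rightarrow> ('b, 'k) vec \<Rightarrow> ('c, 'k) vec) \<Rightarrow> bool" where
  "bilin f \<longleftrightarrow> (\<forall>x. lin (f x)) \<and> (\<forall>y. lin (\<lambda>x. f x y))"

definition perm_alg :: "(('n, 'k::field) vec \<Rightarrow> ('n, 'k) vec \<Rightarrow> ('n, 'k) vec) \<Rightarrow> bool" where
  "perm_alg m \<longleftrightarrow> bilin m \<and>
     (\<forall>x y z. m (m x y) z = m x (m y z) \<and> m x (m y z) = m x (m z y))"

definition nijenhuis :: "(('n, 'k::field) vec \<Rightarrow> ('n, 'k) vec \<Rightarrow> ('n, 'k) vec) \<Rightarrow>
    (('n, 'k) vec \<Rightarrow> ('n, 'k) vec) \<Rightarrow> bool" where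
  "nijenhuis m N \<longleftrightarrow> lin N \<and>
     (\<forall>x y. (\<lambda>i. m (N x) (N y) i + N (N (m x y)) i) = (\<lambda>i. N (m (N x) y) i + N (m x (N y)) i))"

definition nijenhuis_perm :: "(('n, 'k::field) vec \<Rightarrow> ('n, 'k) vec \<Rightarrow> ('n, 'k) vec) \<Rightarrow>
    (('n, 'k) vec \<Rightarrow> ('n, 'k) vec) \<Rightarrow> bool" where
  "nijenhuis_perm m N \<longleftrightarrow> perm_alg m \<and> nijenhuis m N"

text \<open>Here r is written
  as a function ract v x meaning v r(x).\<close>
definition sdprod :: "(('n, 'k::field) vec \<Rightarrow> ('n, 'k) vec \<Rightarrow> ('n, 'k) vec) \<Rightarrow>
    (('n, 'k) vec \<Rightarrow> ('m, 'k) vec \<Rightarrow> ('m, 'k) vec) \<Rightarrow>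
    (('m, 'k) vec \<Rightarrow> ('n, 'k) vec \<Rightarrow> ('m, 'k) vec) \<Rightarrow>
    ('n, 'k) vec \<times> ('m, 'k) vec \<Rightarrow> ('n, 'k) vec \<times> ('m, 'k) vec \<Rightarrow> ('n, 'k) vec \<times> ('m, 'k) vec" where
  "sdprod m l r p q = (m (fst p) (fst q), (\<lambda>i. l (fst p) (snd q) i + r (snd p) (fst q) i))"

definition rep_perm :: "(('n, 'k::field) vec \<Rightarrow> ('n, 'k) vec \<Rightarrow> ('n, 'k) vec) \<Rightarrow>
    (('n, 'k) vec \<Rightarrow> ('m, 'k) vec \<Rightarrow> ('m, 'k) vec) \<Rightarrow>
    (('m, 'k) vec \<Rightarrow> ('n, 'k) vec \<Rightarrow> ('m, 'k) vec) \<Rightarrow> bool" where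
  "rep_perm m l r \<longleftrightarrow> bilin l \<and> bilin r \<and>
     (\<forall>p q s. sdprod m l r (sdprod m l r p q) s = sdprod m l r p (sdprod m l r q s) \<and>
              sdprod m l r p (sdprod m l r q s) = sdprod m l r p (sdprod m l r s q))"

definition rep_nij :: "(('n, 'k::field) vec \<Rightarrow> ('n, 'k) vec \<Rightarrow> ('n, 'k) vec) \<Rightarrow>
    (('n, 'k) vec \<Rightarrow> ('n, 'k) vec) \<Rightarrow>
    (('n, 'k) vec \<Rightarrow> ('m, 'k) vec \<Rightarrow> ('m, 'k) vec) \<Rightarrow>
    (('m, 'k) vec \<Rightarrow> ('n, 'k) vec \<Rightarrow> ('m, 'k) vec) \<Rightarrow>
    (('m, 'k) vec \<Rightarrow> ('m, 'k) vec) \<Rightarrow> bool" where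
  "rep_nij m N l r \<alpha> \<longleftrightarrow> rep_perm m l r \<and> lin \<alpha> \<and>
     (\<forall>x v. (\<lambda>i. l (N x) (\<alpha> v) i + \<alpha> (\<alpha> (l x v)) i) = (\<lambda>i. \<alpha> (l (N x) v) i + \<alpha> (l x (\<alpha> v)) i)) \<and>
     (\<forall>x v. (\<lambda>i. r (\<alpha> v) (N x) i + \<alpha> (\<alpha> (r v x)) i) = (\<lambda>i. \<alpha> (r v (N x)) i + \<alpha> (r (\<alpha> v) x) i))"

definition weak_O_op :: "(('n, 'k::field) vec \<Rightarrow> ('n, 'k) vec \<Rightarrow> ('n, 'k) vec) \<Rightarrow>
    (('n, 'k) vec \<Rightarrow> ('n, 'k) vec) \<Rightarrow>
    (('n, 'k) vec \<Rightarrow> ('m, 'k) vec \<Rightarrow> ('m, 'k) vec) \<Rightarrow>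
    (('m, 'k) vec \<Rightarrow> ('n, 'k) vec \<Rightarrow> ('m, 'k) vec) \<Rightarrow>
    (('m, 'k) vec \<Rightarrow> ('m, 'k) vec) \<Rightarrow> (('m, 'k) vec \<Rightarrow> ('n, 'k) vec) \<Rightarrow> bool" where
  "weak_O_op m N l r \<alpha> T \<longleftrightarrow> lin T \<and>
     (\<forall>u v. m (T u) (T v) = T (\<lambda>i. l (T u) v i + r u (T v) i)) \<and>
     (\<forall>v. N (T v) = T (\<alpha> v))"

definition O_op :: "(('n, 'k::field) vec \<Rightarrow> ('n, 'k) vec \<Rightarrow> ('n, 'k) vec) \<Rightarrow>
    (('n, 'k) vec \<Rightarrow> ('n, 'k) vec) \<Rightarrow>
    (('n, 'k) vec \<Rightarrow> ('m, 'k) vec \<Rightarrow> ('m, 'k) vec) \<Rightarrow>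
    (('m, 'k) vec \<Rightarrow> ('n, 'k) vec \<Rightarrow> ('m, 'k) vec) \<Rightarrow>
    (('m, 'k) vec \<Rightarrow> ('m, 'k) vec) \<Rightarrow> (('m, 'k) vec \<Rightarrow> ('n, 'k) vec) \<Rightarrow> bool" where
  "O_op m N l r \<alpha> T \<longleftrightarrow> rep_nij m N l r \<alpha> \<and> weak_O_op m N l r \<alpha> T"

definition pair :: "('n::finite, 'k::field) vec \<Rightarrow> ('n, 'k) vec \<Rightarrow> 'k" where
  "pair \<xi> x = (\<Sum>i\<in>UNIV. \<xi> i * x i)"

text \<open>Rstar m a \<xi> is \<xi> R*(a): \<langle>\<xi>R*(a), y\<rangle> = \<langle>\<xi>, y a\<rangle>.\<close>
definition Rstar :: "(('n::finite, 'k::field) vec \<Rightarrow> ('n, 'k) vec \<Rightarrow> ('n, 'k) vec) \<Rightarrow>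
    ('n, 'k) vec \<Rightarrow> ('n, 'k) vec \<Rightarrow> ('n, 'k) vec" where
  "Rstar m a \<xi> = (\<lambda>i. pair \<xi> (m (ebas i) a))"

text \<open>Lstar m a \<xi> is L*(a)\<xi>: \<langle>L*(a)\<xi>, y\<rangle> = \<langle>\<xi>, a y\<rangle>.\<close>
definition Lstar :: "(('n::finite, 'k::field) vec \<Rightarrow> ('n, 'k) vec \<Rightarrow> ('n, 'k) vec) \<Rightarrow>
    ('n, 'k) vec \<Rightarrow> ('n, 'k) vec \<Rightarrow> ('n, 'k) vec" where
  "Lstar m a \<xi> = (\<lambda>i. pair \<xi> (m a (ebas i)))"

definition dual_l :: "(('n::finite, 'k::field) vec \<Rightarrow> ('n, 'k) vec \<Rightarrow> ('n, 'k) vec) \<Rightarrow>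
    ('n, 'k) vec \<Rightarrow> ('n, 'k) vec \<Rightarrow> ('n, 'k) vec" where
  "dual_l m a \<xi> = (\<lambda>i. Rstar m a \<xi> i - Lstar m a \<xi> i)"

definition dual_r :: "(('n::finite, 'k::field) vec \<Rightarrow> ('n, 'k) vec \<Rightarrow> ('n, 'k) vec) \<Rightarrow>
    ('n, 'k) vec \<Rightarrow> ('n, 'k) vec \<Rightarrow> ('n, 'k) vec" where
  "dual_r m \<xi> a = Rstar m a \<xi>"

definition dualmap :: "(('n::finite, 'k::field) vec \<Rightarrow> ('n, 'k) vec) \<Rightarrow> ('n, 'k) vec \<Rightarrow> ('n, 'k) vec" where
  "dualmap S \<xi> = (\<lambda>i. pair \<xi> (S (ebas i)))"

text \<open>r = \<Sum>_{i,j} r i j e_i \<otimes> e_j; r\<sharp>(u*) = \<langle>u*, r^1\<rangle> r^2.\<close>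
definition rsharp :: "('n::finite \<Rightarrow> 'n \<Rightarrow> 'k::field) \<Rightarrow> ('n, 'k) vec \<Rightarrow> ('n, 'k) vec" where
  "rsharp r u = (\<lambda>j. \<Sum>i\<in>UNIV. r i j * pair u (ebas i))"

definition tens3 :: "('n, 'k::field) vec \<Rightarrow> ('n, 'k) vec \<Rightarrow> ('n, 'k) vec \<Rightarrow> 'n \<Rightarrow> 'n \<Rightarrow> 'n \<Rightarrow> 'k" where
  "tens3 x y z = (\<lambda>a b c. x a * y b * z c)"

definition tens2 :: "('n, 'k::field) vec \<Rightarrow> ('n, 'k) vec \<Rightarrow> 'n \<Rightarrow> 'n \<Rightarrow> 'k" where
  "tens2 x y = (\<lambda>a b. x a * y b)"

definition r13r12 :: "(('n::finite, 'k::field) vec \<Rightarrow> ('n, 'k) vec \<Rightarrow> ('n, 'k) vec) \<Rightarrow>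
    ('n \<Rightarrow> 'n \<Rightarrow> 'k) \<Rightarrow> 'n \<Rightarrow> 'n \<Rightarrow> 'n \<Rightarrow> 'k" where
  "r13r12 m r = (\<lambda>a b c. \<Sum>i\<in>UNIV. \<Sum>j\<in>UNIV. \<Sum>k\<in>UNIV. \<Sum>l\<in>UNIV.
      r i j * r k l * tens3 (m (ebas i) (ebas k)) (ebas l) (ebas j) a b c)"

definition r13r23 :: "(('n::finite, 'k::field) vec \<Rightarrow> ('n, 'k) vec \<Rightarrow> ('n, 'k) vec) \<Rightarrow>
    ('n \<Rightarrow> 'n \<Rightarrow> 'k) \<Rightarrow> 'n \<Rightarrow> 'n \<Rightarrow> 'n \<Rightarrow> 'k" where
  "r13r23 m r = (\<lambda>a b c. \<Sum>i\<in>UNIV. \<Sum>j\<in>UNIV. \<Sum>k\<in>UNIV. \<Sum>l\<in>UNIV.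
      r i j * r k l * tens3 (ebas i) (ebas k) (m (ebas j) (ebas l)) a b c)"

definition r23r12 :: "(('n::finite, 'k::field) vec \<Rightarrow> ('n, 'k) vec \<Rightarrow> ('n, 'k) vec) \<Rightarrow>
    ('n \<Rightarrow> 'n \<Rightarrow> 'k) \<Rightarrow> 'n \<Rightarrow> 'n \<Rightarrow> 'n \<Rightarrow> 'k" where
  "r23r12 m r = (\<lambda>a b c. \<Sum>i\<in>UNIV. \<Sum>j\<in>UNIV. \<Sum>k\<in>UNIV. \<Sum>l\<in>UNIV.
      r i j * r k l * tens3 (ebas k) (m (ebas i) (ebas l)) (ebas j) a b c)"

definition r12r23 :: "(('n::finite, 'k::field) vec \<Rightarrow> ('n, 'k) vec \<Rightarrow> ('n, 'k) vec) \<Rightarrow>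
    ('n \<Rightarrow> 'n \<Rightarrow> 'k) \<Rightarrow> 'n \<Rightarrow> 'n \<Rightarrow> 'n \<Rightarrow> 'k" where
  "r12r23 m r = (\<lambda>a b c. \<Sum>i\<in>UNIV. \<Sum>j\<in>UNIV. \<Sum>k\<in>UNIV. \<Sum>l\<in>UNIV.
      r i j * r k l * tens3 (ebas i) (m (ebas j) (ebas k)) (ebas l) a b c)"

definition S_adm_PYBE :: "(('n::finite, 'k::field) vec \<Rightarrow> ('n, 'k) vec \<Rightarrow> ('n, 'k) vec) \<Rightarrow>
    (('n, 'k) vec \<Rightarrow> ('n, 'k) vec) \<Rightarrow> (('n, 'k) vec \<Rightarrow> ('n, 'k) vec) \<Rightarrow>
    ('n \<Rightarrow> 'n \<Rightarrow> 'k) \<Rightarrow> bool" where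
  "S_adm_PYBE m N S r \<longleftrightarrow>
     (\<forall>a b c. r13r12 m r a b c - r13r23 m r a b c + r23r12 m r a b c - r12r23 m r a b c = 0) \<and>
     (\<forall>a b. (\<Sum>i\<in>UNIV. \<Sum>j\<in>UNIV. r i j * (tens2 (S (ebas i)) (ebas j) a b
                                         - tens2 (ebas i) (N (ebas j)) a b)) = 0)"

definition S_admissible :: "(('n, 'k::field) vec \<Rightarrow> ('n, 'k) vec \<Rightarrow> ('n, 'k) vec) \<Rightarrow>
    (('n, 'k) vec \<Rightarrow> ('n, 'k) vec) \<Rightarrow> (('n, 'k) vec \<Rightarrow> ('n, 'k) vec) \<Rightarrow> bool" where
  "S_admissible m N S \<longleftrightarrow>
     (\<forall>x y. (\<lambda>i. S (m (N x) y) i + m x (S (S y)) i - m (N x) (S y) i - S (m x (S y)) i) = (\<lambda>i. 0)) \<and>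
     (\<forall>x y. (\<lambda>i. S (m x (N y)) i + m (S (S x)) y i - m (S x) (N y) i - S (m (S x) y) i) = (\<lambda>i. 0))"

end

theory Submission imports Defs begin

definition slin :: "(('m,'k::field) vec \<Rightarrow> 'k) \<Rightarrow> bool" where
 "slin g \<longleftrightarrow> (\<forall>x y. g (\<lambda>i. x i + y i) = g x + g y) \<and> (\<forall>c x. g (\<lambda>i. c * x i) = c * g x)"

lemma ebas_apply: "ebas i j = (if j = i then 1 else 0)" by (simp add: ebas_def)

lemma mult_if1[simp]: "(x::'a::field) * (if P then 1 else 0) = (if P then x else 0)" by simp
lemma mult_if2[simp]: "(if P then 1 else 0) * (x::'a::field) = (if P then x else 0)" by simp

lemma mult_ifz1: "(x::'a::field) * (if P then y else 0) = (if P then x * y else 0)" by simp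
lemma mult_ifz2: "(if P then y else 0) * (x::'a::field) = (if P then y * x else 0)" by simp
lemma sum_if_const: "(\<Sum>k\<in>A. if P then f k else 0) = (if P then (\<Sum>k\<in>A. f k) else 0)" by simp

lemma slin_zero: "slin g \<Longrightarrow> g (\<lambda>i. 0) = 0"
proof -
  assume "slin g"
  hence "\<forall>c x. g (\<lambda>i. c * x i) = c * g x" unfolding slin_def by blast
  from spec[OF spec[OF this, of 0], of "\<lambda>i. 0"] show ?thesis by simp
qed

lemma slin_expand:
  fixes g :: "('m::finite,'k::field) vec \<Rightarrow> 'k"
  assumes "slin g" shows "g x = (\<Sum>i\<in>UNIV. x i * g (ebas i))"
proof -
  have "\<And>A. finite A \<Longrightarrow> g (\<lambda>k. if k \<in> A then x k else 0) = (\<Sum>i\<in>A. x i * g (ebas i))"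
  proof -
    fix A :: "'m set" assume "finite A"
    thus "g (\<lambda>k. if k \<in> A then x k else 0) = (\<Sum>i\<in>A. x i * g (ebas i))"
    proof (induction A rule: finite_induct)
      case empty thus ?case using slin_zero[OF assms] by simp
    next
      case (insert a A)
      have e: "(\<lambda>k. if k \<in> insert a A then x k else 0) = (\<lambda>k. (if k \<in> A then x k else 0) + (\<lambda>k. x a * ebas a k) k)"
        using insert(2) by (auto simp: ebas_apply)
      have "g (\<lambda>k. x a * ebas a k) = x a * g (ebas a)" using assms unfolding slin_def by blast
      thus ?case unfolding e using assms insert unfolding slin_def by simp
    qed
  qed
  from this[of UNIV] show ?thesis by simp
qed

lemma lin_slin: "lin f \<Longrightarrow> slin (\<lambda>x. f x j)"
  unfolding lin_def slin_def by (metis)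

lemma lin_expand:
  fixes f :: "('m::finite,'k::field) vec \<Rightarrow> ('n,'k) vec"
  assumes "lin f" shows "f x j = (\<Sum>i\<in>UNIV. x i * f (ebas i) j)"
  by (rule slin_expand[OF lin_slin[OF assms]])

lemma slin_comp: "slin g \<Longrightarrow> lin f \<Longrightarrow> slin (\<lambda>x. g (f x))"
  unfolding slin_def lin_def by simp

lemma lin_comp: "lin f \<Longrightarrow> lin g \<Longrightarrow> lin (\<lambda>x. f (g x))"
  unfolding lin_def by simp

lemma slin_add: "slin g \<Longrightarrow> slin h \<Longrightarrow> slin (\<lambda>x. g x + h x)"
  unfolding slin_def by (simp add: algebra_simps)
lemma slin_diff: "slin g \<Longrightarrow> slin h \<Longrightarrow> slin (\<lambda>x. g x - h x)"
  unfolding slin_def by (simp add: algebra_simps)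

lemma slin_pair2: "slin (\<lambda>x. pair w x)"
  unfolding slin_def pair_def by (simp add: algebra_simps sum.distrib sum_distrib_left)
lemma slin_pair1: "slin (\<lambda>x. pair x w)"
  unfolding slin_def pair_def by (simp add: algebra_simps sum.distrib sum_distrib_left)

lemma pair_ebas1: "pair (ebas i) x = x i"
  unfolding pair_def by (simp add: ebas_apply)
lemma pair_ebas2: "pair x (ebas i) = x i"
  unfolding pair_def by (simp add: ebas_apply)

lemma pair_ext: "(\<And>t. pair X t = pair Y t) \<Longrightarrow> X = Y"
  by (metis pair_ebas2 ext)

lemma pair_add1: "pair (\<lambda>i. A i + B i) t = pair A t + pair B t"
  unfolding pair_def by (simp add: algebra_simps sum.distrib)
lemma pair_diff1: "pair (\<lambda>i. A i - B i) t = pair A t - pair B t"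
  unfolding pair_def by (simp add: algebra_simps sum_subtractf)
lemma pair_add2: "pair t (\<lambda>i. A i + B i) = pair t A + pair t B"
  unfolding pair_def by (simp add: algebra_simps sum.distrib)
lemma pair_diff2: "pair t (\<lambda>i. A i - B i) = pair t A - pair t B"
  unfolding pair_def by (simp add: algebra_simps sum_subtractf)

lemma bilin_l: "bilin m \<Longrightarrow> lin (m x)" unfolding bilin_def by blast
lemma bilin_r: "bilin m \<Longrightarrow> lin (\<lambda>x. m x y)" unfolding bilin_def by blast

lemma pair_Rstar: "bilin m \<Longrightarrow> pair (Rstar m a \<xi>) y = pair \<xi> (m y a)"
proof -
  assume b: "bilin m"
  have "pair \<xi> (m y a) = (\<Sum>i\<in>UNIV. y i * pair \<xi> (m (ebas i) a))"
    by (rule slin_expand[OF slin_comp[OF slin_pair2 bilin_r[OF b]]])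
  thus ?thesis unfolding Rstar_def by (simp add: pair_def mult.commute)
qed

lemma pair_Lstar: "bilin m \<Longrightarrow> pair (Lstar m a \<xi>) y = pair \<xi> (m a y)"
proof -
  assume b: "bilin m"
  have "pair \<xi> (m a y) = (\<Sum>i\<in>UNIV. y i * pair \<xi> (m a (ebas i)))"
    by (rule slin_expand[OF slin_comp[OF slin_pair2 bilin_l[OF b]]])
  thus ?thesis unfolding Lstar_def by (simp add: pair_def mult.commute)
qed

lemma pair_dualmap: "lin S \<Longrightarrow> pair (dualmap S \<xi>) y = pair \<xi> (S y)"
proof -
  assume b: "lin S"
  have "pair \<xi> (S y) = (\<Sum>i\<in>UNIV. y i * pair \<xi> (S (ebas i)))"
    by (rule slin_expand[OF slin_comp[OF slin_pair2 b]])
  thus ?thesis unfolding dualmap_def by (simp add: pair_def mult.commute)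
qed

lemma pair_dual_l: "bilin m \<Longrightarrow> pair (dual_l m a \<xi>) y = pair \<xi> (m y a) - pair \<xi> (m a y)"
  unfolding dual_l_def by (simp add: pair_diff1 pair_Rstar pair_Lstar)
lemma pair_dual_r: "bilin m \<Longrightarrow> pair (dual_r m \<xi> a) y = pair \<xi> (m y a)"
  unfolding dual_r_def by (simp add: pair_Rstar)

lemma rsharp_sym: "\<forall>i j. r i j = r j i \<Longrightarrow> pair w (rsharp r u) = pair u (rsharp r w)"
  unfolding rsharp_def pair_def
  by (simp add: pair_ebas2[unfolded pair_def] sum_distrib_left algebra_simps, subst sum.swap, simp)

lemma lin_rsharp: "lin (rsharp r)"
  unfolding lin_def rsharp_def by (simp add: pair_add1 pair_def algebra_simps sum.distrib sum_distrib_left)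

lemma rsharp_ebas: "rsharp r (ebas c) = (\<lambda>j. r c j)"
  unfolding rsharp_def by (simp add: pair_ebas1 ebas_apply)

lemma slin_basis:
  fixes g :: "('m::finite,'k::field) vec \<Rightarrow> 'k"
  shows "slin g \<Longrightarrow> (\<forall>v. g v = 0) \<longleftrightarrow> (\<forall>a. g (ebas a) = 0)"
  by (metis (no_types, lifting) mult_zero_right slin_expand sum.neutral)

lemma bilin_expand:
  fixes m :: "('n::finite,'k::field) vec \<Rightarrow> ('n, 'k) vec \<Rightarrow> ('n, 'k) vec"
  assumes b: "bilin m" shows "m x y a = (\<Sum>i\<in>UNIV. \<Sum>k\<in>UNIV. x i * y k * m (ebas i) (ebas k) a)"
proof -
  have "m x y a = (\<Sum>i\<in>UNIV. x i * m (ebas i) y a)" by (rule lin_expand[OF bilin_r[OF b]])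
  also have "\<dots> = (\<Sum>i\<in>UNIV. x i * (\<Sum>k\<in>UNIV. y k * m (ebas i) (ebas k) a))"
    by (simp add: lin_expand[OF bilin_l[OF b], of "ebas _" y])
  finally show ?thesis by (simp add: sum_distrib_left mult.assoc)
qed


lemma t1: assumes b: "bilin m" and sy: "\<forall>i j. r i j = r j i"
  shows "r13r12 m r a b c = pair (ebas a) (m (rsharp r (ebas c)) (rsharp r (ebas b)))"
  unfolding r13r12_def tens3_def pair_ebas1 rsharp_ebas bilin_expand[OF b, of "r c"]
  by (simp add: ebas_apply sy mult_ifz1 mult_ifz2 sum_if_const)

lemma t2: assumes b: "bilin m" and sy: "\<forall>i j. r i j = r j i"
  shows "r13r23 m r a b c = pair (ebas c) (m (rsharp r (ebas a)) (rsharp r (ebas b)))"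
  unfolding r13r23_def tens3_def pair_ebas1 rsharp_ebas bilin_expand[OF b, of "r a"]
  by (simp add: ebas_apply sy mult_ifz1 mult_ifz2 sum_if_const)

lemma t3: assumes b: "bilin m" and sy: "\<forall>i j. r i j = r j i"
  shows "r23r12 m r a b c = pair (ebas b) (m (rsharp r (ebas c)) (rsharp r (ebas a)))"
  unfolding r23r12_def tens3_def pair_ebas1 rsharp_ebas bilin_expand[OF b, of "r c"]
  by (simp add: ebas_apply sy mult_ifz1 mult_ifz2 sum_if_const)

lemma t4: assumes b: "bilin m" and sy: "\<forall>i j. r i j = r j i"
  shows "r12r23 m r a b c = pair (ebas b) (m (rsharp r (ebas a)) (rsharp r (ebas c)))"
  unfolding r12r23_def tens3_def pair_ebas1 rsharp_ebas bilin_expand[OF b, of "r a"]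
  by (simp add: ebas_apply sy mult_ifz1 mult_ifz2 sum_if_const)


definition EE where "EE m r u v w = pair u (m (rsharp r w) (rsharp r v)) - pair w (m (rsharp r u) (rsharp r v))
   + pair v (m (rsharp r w) (rsharp r u)) - pair v (m (rsharp r u) (rsharp r w))"

lemma tensor_E: assumes b: "bilin m" and sy: "\<forall>i j. r i j = r j i"
  shows "r13r12 m r a b c - r13r23 m r a b c + r23r12 m r a b c - r12r23 m r a b c = EE m r (ebas a) (ebas b) (ebas c)"
  unfolding EE_def t1[OF assms] t2[OF assms] t3[OF assms] t4[OF assms] ..

lemma op_E: assumes b: "bilin m" and sy: "\<forall>i j. r i j = r j i"
  shows "m (rsharp r u) (rsharp r v) c - rsharp r (\<lambda>i. dual_l m (rsharp r u) v i + dual_r m u (rsharp r v) i) c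
    = - EE m r u v (ebas c)"
proof -
  have "rsharp r (\<lambda>i. dual_l m (rsharp r u) v i + dual_r m u (rsharp r v) i) c
     = pair (\<lambda>i. dual_l m (rsharp r u) v i + dual_r m u (rsharp r v) i) (rsharp r (ebas c))"
    using rsharp_sym[OF sy] pair_ebas1 by metis
  moreover have "m (rsharp r u) (rsharp r v) c = pair (ebas c) (m (rsharp r u) (rsharp r v))"
    by (simp add: pair_ebas1)
  ultimately show ?thesis unfolding EE_def
    by (simp add: pair_add1 pair_dual_l[OF b] pair_dual_r[OF b])
qed

lemma lin_dualmap: "lin (dualmap S)"
  unfolding lin_def dualmap_def by (simp add: pair_add1 pair_def algebra_simps sum.distrib sum_distrib_left)

lemma slin_E_u: assumes b: "bilin m" shows "slin (\<lambda>u. EE m r u v w)"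
  unfolding EE_def
  by (intro slin_add slin_diff slin_pair1 slin_comp[OF slin_pair2] lin_comp[OF bilin_r[OF b] lin_rsharp]
       lin_comp[OF bilin_l[OF b] lin_rsharp])

lemma slin_E_v: assumes b: "bilin m" shows "slin (\<lambda>v. EE m r u v w)"
  unfolding EE_def
  by (intro slin_add slin_diff slin_pair1 slin_comp[OF slin_pair2] lin_comp[OF bilin_r[OF b] lin_rsharp]
       lin_comp[OF bilin_l[OF b] lin_rsharp])

lemma tens2_G: assumes "lin N" shows "(\<Sum>i\<in>UNIV. \<Sum>j\<in>UNIV. r i j * (tens2 (S (ebas i)) (ebas j) a b - tens2 (ebas i) (N (ebas j)) a b))
   = rsharp r (dualmap S (ebas a)) b - N (rsharp r (ebas a)) b"
proof -
  show ?thesis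
  unfolding tens2_def rsharp_ebas lin_expand[OF \<open>lin N\<close>, of "r a"]
  by (simp add: rsharp_def dualmap_def pair_ebas1 pair_ebas2 ebas_apply right_diff_distrib sum_subtractf mult_ifz1 mult_ifz2 sum_if_const mult.commute)
qed


lemma EE_basis: assumes b: "bilin m"
  shows "(\<forall>u v. EE m r u v w = 0) \<longleftrightarrow> (\<forall>a c. EE m r (ebas a) (ebas c) w = 0)"
proof -
  have "(\<forall>u v. EE m r u v w = 0) \<longleftrightarrow> (\<forall>u c. EE m r u (ebas c) w = 0)"
    using slin_basis[OF slin_E_v[OF b]] by blast
  also have "\<dots> \<longleftrightarrow> (\<forall>c u. EE m r u (ebas c) w = 0)" by blast
  also have "\<dots> \<longleftrightarrow> (\<forall>c a. EE m r (ebas a) (ebas c) w = 0)"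
    using slin_basis[OF slin_E_u[OF b]] by blast
  finally show ?thesis by blast
qed

lemma part1: assumes b: "bilin m" and N: "lin N" and sy: "\<forall>i j. r i j = r j i" and S: "lin S"
  shows "S_adm_PYBE m N S r \<longleftrightarrow> weak_O_op m N (dual_l m) (dual_r m) (dualmap S) (rsharp r)"
proof -
  have A: "(\<forall>a b c. r13r12 m r a b c - r13r23 m r a b c + r23r12 m r a b c - r12r23 m r a b c = 0)
     \<longleftrightarrow> (\<forall>u v. m (rsharp r u) (rsharp r v) = rsharp r (\<lambda>i. dual_l m (rsharp r u) v i + dual_r m u (rsharp r v) i))"
  proof -
    have "(\<forall>u v. m (rsharp r u) (rsharp r v) = rsharp r (\<lambda>i. dual_l m (rsharp r u) v i + dual_r m u (rsharp r v) i))
       \<longleftrightarrow> (\<forall>u v c. m (rsharp r u) (rsharp r v) c - rsharp r (\<lambda>i. dual_l m (rsharp r u) v i + dual_r m u (rsharp r v) i) c = 0)"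
      by (simp add: fun_eq_iff)
    also have "\<dots> \<longleftrightarrow> (\<forall>u v c. EE m r u v (ebas c) = 0)" by (simp add: op_E[OF b sy])
    also have "\<dots> \<longleftrightarrow> (\<forall>c. \<forall>u v. EE m r u v (ebas c) = 0)" by blast
    also have "\<dots> \<longleftrightarrow> (\<forall>c a b. EE m r (ebas a) (ebas b) (ebas c) = 0)" by (simp add: EE_basis[OF b])
    finally show ?thesis by (auto simp: tensor_E[OF b sy])
  qed
  have B: "(\<forall>a b. (\<Sum>i\<in>UNIV. \<Sum>j\<in>UNIV. r i j * (tens2 (S (ebas i)) (ebas j) a b
                                         - tens2 (ebas i) (N (ebas j)) a b)) = 0)
     \<longleftrightarrow> (\<forall>v. N (rsharp r v) = rsharp r (dualmap S v))"
  proof -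
    have sl: "slin (\<lambda>v. rsharp r (dualmap S v) b - N (rsharp r v) b)" for b
      by (intro slin_diff lin_slin lin_comp[OF lin_rsharp lin_dualmap] lin_comp[OF N lin_rsharp])
    have "(\<forall>v. N (rsharp r v) = rsharp r (dualmap S v)) \<longleftrightarrow> (\<forall>b v. rsharp r (dualmap S v) b - N (rsharp r v) b = 0)"
      by (auto simp: fun_eq_iff)
    also have "\<dots> \<longleftrightarrow> (\<forall>b a. rsharp r (dualmap S (ebas a)) b - N (rsharp r (ebas a)) b = 0)"
      using slin_basis[OF sl] by blast
    finally show ?thesis by (auto simp: tens2_G[OF N])
  qed
  show ?thesis unfolding S_adm_PYBE_def weak_O_op_def using A B lin_rsharp by blast
qed


lemma pair_smul1: "pair (\<lambda>i. c * A i) t = c * pair A t"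
  unfolding pair_def by (simp add: sum_distrib_left algebra_simps)
lemma pair_smul2: "pair t (\<lambda>i. c * A i) = c * pair t A"
  unfolding pair_def by (simp add: sum_distrib_left algebra_simps)
lemma lin_add: "lin f \<Longrightarrow> f (\<lambda>i. x i + y i) = (\<lambda>i. f x i + f y i)" unfolding lin_def by blast
lemma lin_smul: "lin f \<Longrightarrow> f (\<lambda>i. c * x i) = (\<lambda>i. c * f x i)" unfolding lin_def by blast

lemma m_add1: assumes "bilin m" shows "m (\<lambda>i. x i + y i) z = (\<lambda>i. m x z i + m y z i)"
  using lin_add[OF bilin_r[OF assms, of z], of x y] by simp
lemma m_smul1: assumes "bilin m" shows "m (\<lambda>i. c * x i) z = (\<lambda>i. c * m x z i)"
  using lin_smul[OF bilin_r[OF assms, of z], of c x] by simp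

lemma bilin_dual_l: assumes b: "bilin m" shows "bilin (dual_l m)"
  unfolding bilin_def lin_def
  by (auto intro!: pair_ext simp: pair_dual_l[OF b] pair_add1 pair_smul1 pair_add2 pair_smul2
        lin_add[OF bilin_l[OF b]] lin_smul[OF bilin_l[OF b]] m_add1[OF b] m_smul1[OF b] algebra_simps)

lemma bilin_dual_r: assumes b: "bilin m" shows "bilin (dual_r m)"
  unfolding bilin_def lin_def
  by (auto intro!: pair_ext simp: pair_dual_r[OF b] pair_add1 pair_smul1 pair_add2 pair_smul2
        lin_add[OF bilin_l[OF b]] lin_smul[OF bilin_l[OF b]] m_add1[OF b] m_smul1[OF b] algebra_simps)

lemma rep_perm_dual: assumes p: "perm_alg m" shows "rep_perm m (dual_l m) (dual_r m)"
proof -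
  have b: "bilin m" using p perm_alg_def by blast
  have as: "m (m x y) z = m x (m y z)" for x y z using p perm_alg_def by blast
  have co: "m x (m y z) = m x (m z y)" for x y z using p perm_alg_def by blast
  show ?thesis unfolding rep_perm_def
  proof (intro conjI bilin_dual_l[OF b] bilin_dual_r[OF b] allI)
    fix p q s :: "('a, 'b) vec \<times> ('a, 'b) vec"
    show "sdprod m (dual_l m) (dual_r m) (sdprod m (dual_l m) (dual_r m) p q) s =
          sdprod m (dual_l m) (dual_r m) p (sdprod m (dual_l m) (dual_r m) q s)"
      unfolding sdprod_def
      by (auto intro!: pair_ext simp: as pair_dual_l[OF b] pair_dual_r[OF b] pair_add1 pair_add2 algebra_simps co)
    show "sdprod m (dual_l m) (dual_r m) p (sdprod m (dual_l m) (dual_r m) q s) =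
          sdprod m (dual_l m) (dual_r m) p (sdprod m (dual_l m) (dual_r m) s q)"
      unfolding sdprod_def
      by (auto intro!: pair_ext simp: as pair_dual_l[OF b] pair_dual_r[OF b] pair_add1 pair_add2 algebra_simps co)
  qed
qed


lemma rep_nij_dual: assumes p: "perm_alg m" and S: "lin S" and adm: "S_admissible m N S"
  shows "rep_nij m N (dual_l m) (dual_r m) (dualmap S)"
proof -
  have b: "bilin m" using p perm_alg_def by blast
  have a1: "pair v (S (m (N x) y)) + pair v (m x (S (S y))) - pair v (m (N x) (S y)) - pair v (S (m x (S y))) = 0" for v x y
  proof -
    have "(\<lambda>i. S (m (N x) y) i + m x (S (S y)) i - m (N x) (S y) i - S (m x (S y)) i) = (\<lambda>i. 0)"
      using adm S_admissible_def by blast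
    hence "pair v (\<lambda>i. S (m (N x) y) i + m x (S (S y)) i - m (N x) (S y) i - S (m x (S y)) i) = pair v (\<lambda>i. 0)" by simp
    thus ?thesis by (simp add: pair_add2 pair_diff2 pair_def)
  qed
  have a2: "pair v (S (m x (N y))) + pair v (m (S (S x)) y) - pair v (m (S x) (N y)) - pair v (S (m (S x) y)) = 0" for v x y
  proof -
    have "(\<lambda>i. S (m x (N y)) i + m (S (S x)) y i - m (S x) (N y) i - S (m (S x) y) i) = (\<lambda>i. 0)"
      using adm S_admissible_def by blast
    hence "pair v (\<lambda>i. S (m x (N y)) i + m (S (S x)) y i - m (S x) (N y) i - S (m (S x) y) i) = pair v (\<lambda>i. 0)" by simp
    thus ?thesis by (simp add: pair_add2 pair_diff2 pair_def)
  qed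
  have a1s: "pair v (S (m x (S y))) = pair v (S (m (N x) y)) + pair v (m x (S (S y))) - pair v (m (N x) (S y))" for v x y
    using a1[of v x y] by (simp add: right_minus_eq)
  have a2s: "pair v (S (m (S x) y)) = pair v (S (m x (N y))) + pair v (m (S (S x)) y) - pair v (m (S x) (N y))" for v x y
    using a2[of v x y] by (simp add: right_minus_eq)
  show ?thesis unfolding rep_nij_def
  proof (intro conjI rep_perm_dual[OF p] lin_dualmap allI)
    fix x v
    show "(\<lambda>i. dual_l m (N x) (dualmap S v) i + dualmap S (dualmap S (dual_l m x v)) i) =
          (\<lambda>i. dualmap S (dual_l m (N x) v) i + dualmap S (dual_l m x (dualmap S v)) i)"
    proof (rule pair_ext)
      fix t
      show "pair (\<lambda>i. dual_l m (N x) (dualmap S v) i + dualmap S (dualmap S (dual_l m x v)) i) t =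
          pair (\<lambda>i. dualmap S (dual_l m (N x) v) i + dualmap S (dual_l m x (dualmap S v)) i) t"
        by (simp add: pair_add1 pair_dual_l[OF b] pair_dualmap[OF S] a1s a2s algebra_simps)
    qed
    show "(\<lambda>i. dual_r m (dualmap S v) (N x) i + dualmap S (dualmap S (dual_r m v x)) i) =
          (\<lambda>i. dualmap S (dual_r m v (N x)) i + dualmap S (dual_r m (dualmap S v) x) i)"
    proof (rule pair_ext)
      fix t
      show "pair (\<lambda>i. dual_r m (dualmap S v) (N x) i + dualmap S (dualmap S (dual_r m v x)) i) t =
          pair (\<lambda>i. dualmap S (dual_r m v (N x)) i + dualmap S (dual_r m (dualmap S v) x) i) t"
        by (simp add: pair_add1 pair_dual_r[OF b] pair_dualmap[OF S] a2s algebra_simps)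
    qed
  qed
qed

theorem corollary2p38:
  fixes m :: "('n::finite, 'k::field) vec \<Rightarrow> ('n, 'k) vec \<Rightarrow> ('n, 'k) vec"
    and N S :: "('n, 'k) vec \<Rightarrow> ('n, 'k) vec"
    and r :: "'n \<Rightarrow> 'n \<Rightarrow> 'k"
  assumes "nijenhuis_perm m N"
    and "\<forall>i j. r i j = r j i"
    and "lin S"
  shows "(S_adm_PYBE m N S r \<longleftrightarrow>
            weak_O_op m N (dual_l m) (dual_r m) (dualmap S) (rsharp r)) \<and>
         (S_admissible m N S \<longrightarrow>
            (S_adm_PYBE m N S r \<longleftrightarrow>
               O_op m N (dual_l m) (dual_r m) (dualmap S) (rsharp r)))"
proof -
  have p: "perm_alg m" and N: "lin N" using assms(1) unfolding nijenhuis_perm_def nijenhuis_def by blast+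
  have b: "bilin m" using p perm_alg_def by blast
  have P1: "S_adm_PYBE m N S r \<longleftrightarrow> weak_O_op m N (dual_l m) (dual_r m) (dualmap S) (rsharp r)"
    by (rule part1[OF b N assms(2) assms(3)])
  show ?thesis using P1 rep_nij_dual[OF p assms(3)] unfolding O_op_def by blast
qed

end
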